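(* Consider unknown functions $\theta_1,\theta_2,\theta_3,\theta_4,\theta_1'$ of $(z,\tau)$ and unknown coefficient functions $\vartheta_2,\vartheta_3,\vartheta_4,\eta$ of $\tau$ alone, subject to the system (S$_z$) and (S$_\tau$) given in the context. This system is compatible (i.e. the mixed derivatives $\partial_\tau\partial_z$ and $\partial_z\partial_\tau$ of each of the five unknowns, computed via the system, agree) if and only if the coefficients satisfy $$\frac{d\vartheta_2}{d\tau}=\frac{i}{\pi}\Big\{\eta+\frac{\pi^2}{12}(\vartheta_3^4+\vartheta_4^4)\Big\}\vartheta_2,\quad \frac{d\vartheta_3}{d\tau}=\frac{i}{\pi}\Big\{\eta+\frac{\pi^2}{12}(\vartheta_3^4+\vartheta_4^4-3\mathbf{B}^4\vartheta_4^4)\Big\}\vartheta_3,$$ $$\frac{d\vartheta_4}{d\tau}=\frac{i}{\pi}\Big\{\eta+\frac{\pi^2}{12}(\vartheta_3^4+\vartheta_4^4-3\mathbf{A}^4\vartheta_3^4)\Big\}\vartheta_4,\quad \frac{d\eta}{d\tau}=\frac{i}{\pi}2\eta^2-\frac{\pi^3}{72}i\big\{\vartheta_3^8+(9\mathbf{A}^4\mathbf{B}^4-6\mathbf{A}^4-6\mathbf{B}^4+2)\vartheta_3^4\vartheta_4^4+\vartheta_4^8\big\},$$ where $\mathbf{A}^4,\mathbf{B}^4$ are defined by $\mathbf{A}^4\vartheta_3^2\theta_1^2=\vartheta_2^2\theta_4^2-\vartheta_4^2\theta_2^2$ and $\mathbf{B}^4\vartheta_4^2\theta_1^2=\vartheta_2^2\theta_3^2-\vartheta_3^2\theta_2^2$,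 and these are algebraic first integrals of the system: on its solutions $\partial_z\mathbf{A}=\partial_z\mathbf{B}=\partial_\tau\mathbf{A}=\partial_\tau\mathbf{B}=0$. The three functions $(\vartheta_3,\vartheta_4,\eta)$ are differentially closed under these equations.
   Context: Let $\Lambda_0=\eta+\frac{\pi^2}{12}(\vartheta_3^4+\vartheta_4^4)$. System (S$_z$): $\partial_z\theta_1=\theta_1'$; $\partial_z\theta_2=\frac{\theta_1'}{\theta_1}\theta_2-\pi\vartheta_2^2\frac{\theta_3\theta_4}{\theta_1}$; $\partial_z\theta_3=\frac{\theta_1'}{\theta_1}\theta_3-\pi\vartheta_3^2\frac{\theta_2\theta_4}{\theta_1}$; $\partial_z\theta_4=\frac{\theta_1'}{\theta_1}\theta_4-\pi\vartheta_4^2\frac{\theta_2\theta_3}{\theta_1}$; $\partial_z\theta_1'=\frac{\theta_1'^2}{\theta_1}-\pi^2\vartheta_3^2\vartheta_4^2\frac{\theta_2^2}{\theta_1}-4\Lambda_0\theta_1$. System (S$_\tau$): $\partial_\tau\theta_1=\frac{-i}{4\pi}\frac{\theta_1'^2}{\theta_1}+\frac{i\pi}{4}\vartheta_3^2\vartheta_4^2\frac{\theta_2^2}{\theta_1}+\frac i\pi\Lambda_0\theta_1$; $\partial_\tau\theta_2=\frac{-i}{4\pi}\frac{\theta_1'^2}{\theta_1^2}\theta_2+\frac i2\vartheta_2^2\theta_1'\frac{\theta_3\theta_4}{\theta_1^2}+\frac{i\pi}{4}(\vartheta_3^2\vartheta_4^2\theta_2^2-\vartheta_2^2\vartheta_4^2\theta_3^2-\vartheta_2^2\vartheta_3^2\theta_4^2)\frac{\theta_2}{\theta_1^2}+\frac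 i\pi\Lambda_0\theta_2$; $\partial_\tau\theta_3=\frac{-i}{4\pi}\frac{\theta_1'^2}{\theta_1^2}\theta_3+\frac i2\vartheta_3^2\theta_1'\frac{\theta_2\theta_4}{\theta_1^2}-\frac{i\pi}{4}\vartheta_2^2\vartheta_3^2\frac{\theta_4^2}{\theta_1^2}\theta_3+\frac i\pi\Lambda_0\theta_3$; $\partial_\tau\theta_4=\frac{-i}{4\pi}\frac{\theta_1'^2}{\theta_1^2}\theta_4+\frac i2\vartheta_4^2\theta_1'\frac{\theta_2\theta_3}{\theta_1^2}-\frac{i\pi}{4}\vartheta_2^2\vartheta_4^2\frac{\theta_3^2}{\theta_1^2}\theta_4+\frac i\pi\Lambda_0\theta_4$; $\partial_\tau\theta_1'=\frac{-i}{4\pi}\frac{\theta_1'^3}{\theta_1^2}+\frac{3i}{\pi}\{\frac{\pi^2}{4}\vartheta_3^2\vartheta_4^2\frac{\theta_2^2}{\theta_1^2}+\Lambda_0\}\theta_1'-\frac i2\pi^2\vartheta_2^2\vartheta_3^2\vartheta_4^2\frac{\theta_2\theta_3\theta_4}{\theta_1^2}$. *)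

theory Defs
  imports "HOL-Analysis.Analysis"
begin

text \<open>Pointwise (jet-level) formalization.
  A state x = (th1, th2, th3, th4, th1') collects the values of the five unknowns
  theta_1, theta_2, theta_3, theta_4, theta_1' at a point (z, tau);
  a coefficient tuple c = (v2, v3, v4, eta) collects the values of
  vartheta_2, vartheta_3, vartheta_4, eta at tau; w = (v2', v3', v4', eta')
  collects their tau-derivatives.\<close>

type_synonym st = "complex \<times> complex \<times> complex \<times> complex \<times> complex"
type_synonym co = "complex \<times> complex \<times> complex \<times> complex"

abbreviation pic :: complex where "pic \<equiv> complex_of_real pi"

definition Lam0 :: "co \<Rightarrow> complex" where
  "Lam0 c = (case c of (v2, v3, v4, e) \<Rightarrow> e + pic^2 / 12 * (v3^4 + v4^4))"

definition Zsys :: "co \<Rightarrow> st \<Rightarrow> st" where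
  "Zsys c x = (case c of (v2, v3, v4, e) \<Rightarrow> case x of (t1, t2, t3, t4, p) \<Rightarrow>
     (p,
      p / t1 * t2 - pic * v2^2 * (t3 * t4) / t1,
      p / t1 * t3 - pic * v3^2 * (t2 * t4) / t1,
      p / t1 * t4 - pic * v4^2 * (t2 * t3) / t1,
      p^2 / t1 - pic^2 * v3^2 * v4^2 * t2^2 / t1 - 4 * Lam0 c * t1))"

definition Tsys :: "co \<Rightarrow> st \<Rightarrow> st" where
  "Tsys c x = (case c of (v2, v3, v4, e) \<Rightarrow> case x of (t1, t2, t3, t4, p) \<Rightarrow>
     (- \<i> / (4 * pic) * p^2 / t1 + \<i> * pic / 4 * v3^2 * v4^2 * t2^2 / t1
        + \<i> / pic * Lam0 c * t1,
      - \<i> / (4 * pic) * p^2 / t1^2 * t2 + \<i> / 2 * v2^2 * p * (t3 * t4) / t1^2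
        + \<i> * pic / 4 * (v3^2 * v4^2 * t2^2 - v2^2 * v4^2 * t3^2 - v2^2 * v3^2 * t4^2) * t2 / t1^2
        + \<i> / pic * Lam0 c * t2,
      - \<i> / (4 * pic) * p^2 / t1^2 * t3 + \<i> / 2 * v3^2 * p * (t2 * t4) / t1^2
        - \<i> * pic / 4 * v2^2 * v3^2 * t4^2 / t1^2 * t3 + \<i> / pic * Lam0 c * t3,
      - \<i> / (4 * pic) * p^2 / t1^2 * t4 + \<i> / 2 * v4^2 * p * (t2 * t3) / t1^2
        - \<i> * pic / 4 * v2^2 * v4^2 * t3^2 / t1^2 * t4 + \<i> / pic * Lam0 c * t4,
      - \<i> / (4 * pic) * p^3 / t1^2
        + 3 * \<i> / pic * (pic^2 / 4 * v3^2 * v4^2 * t2^2 / t1^2 + Lam0 c) * p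
        - \<i> / 2 * pic^2 * v2^2 * v3^2 * v4^2 * (t2 * t3 * t4) / t1^2))"

text \<open>Compatibility at a point: the mixed derivatives d_tau d_z and d_z d_tau of each
  of the five unknowns, computed via the system (chain rule along the flows), agree.
  d_tau (Zsys c x) = derivative of Zsys in direction (w, Tsys c x);
  d_z (Tsys c x)   = derivative of Tsys in direction (0, Zsys c x)
  (the coefficients do not depend on z).\<close>
definition compatible :: "co \<Rightarrow> co \<Rightarrow> st \<Rightarrow> bool" where
  "compatible c w x \<longleftrightarrow>
     vector_derivative (\<lambda>t::real. Zsys (c + t *\<^sub>R w) (x + t *\<^sub>R Tsys c x)) (at 0)
   = vector_derivative (\<lambda>t::real. Tsys c (x + t *\<^sub>R Zsys c x)) (at 0)"

definition A4 :: "co \<Rightarrow> st \<Rightarrow> complex" where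
  "A4 c x = (case c of (v2, v3, v4, e) \<Rightarrow> case x of (t1, t2, t3, t4, p) \<Rightarrow>
     (v2^2 * t4^2 - v4^2 * t2^2) / (v3^2 * t1^2))"

definition B4 :: "co \<Rightarrow> st \<Rightarrow> complex" where
  "B4 c x = (case c of (v2, v3, v4, e) \<Rightarrow> case x of (t1, t2, t3, t4, p) \<Rightarrow>
     (v2^2 * t3^2 - v3^2 * t2^2) / (v4^2 * t1^2))"

definition coef_rhs :: "co \<Rightarrow> st \<Rightarrow> co" where
  "coef_rhs c x = (case c of (v2, v3, v4, e) \<Rightarrow>
     (\<i> / pic * (e + pic^2 / 12 * (v3^4 + v4^4)) * v2,
      \<i> / pic * (e + pic^2 / 12 * (v3^4 + v4^4 - 3 * B4 c x * v4^4)) * v3,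
      \<i> / pic * (e + pic^2 / 12 * (v3^4 + v4^4 - 3 * A4 c x * v3^4)) * v4,
      \<i> / pic * 2 * e^2 - pic^3 / 72 * \<i> * (v3^8
         + (9 * A4 c x * B4 c x - 6 * A4 c x - 6 * B4 c x + 2) * v3^4 * v4^4 + v4^8)))"

end

theory Submission
  imports Defs
begin

definition Lg :: "complex \<Rightarrow> co \<Rightarrow> complex" where
  "Lg P c = (case c of (v2, v3, v4, e) \<Rightarrow> e + P^2 / 12 * (v3^4 + v4^4))"
definition LDg :: "complex \<Rightarrow> co \<Rightarrow> co \<Rightarrow> complex" where
  "LDg P c w = (case c of (v2, v3, v4, e) \<Rightarrow> case w of (a2, a3, a4, ae) \<Rightarrow>
      ae + P^2/12*(4* v3^3*a3 + 4* v4^3*a4))"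

definition ZDg :: "complex \<Rightarrow> co \<Rightarrow> co \<Rightarrow> st \<Rightarrow> st \<Rightarrow> st" where
  "ZDg P c w x d = (case c of (v2, v3, v4, e) \<Rightarrow> case w of (a2, a3, a4, ae) \<Rightarrow>
     case x of (t1, t2, t3, t4, p) \<Rightarrow> case d of (d1, d2, d3, d4, dp) \<Rightarrow>
   (dp,
    (dp*t2 + p*d2)/t1 - p*t2*d1/t1^2 - P*(2* v2*a2*t3*t4 + v2^2*(d3*t4+t3*d4))/t1 + P* v2^2*t3*t4*d1/t1^2,
    (dp*t3 + p*d3)/t1 - p*t3*d1/t1^2 - P*(2* v3*a3*t2*t4 + v3^2*(d2*t4+t2*d4))/t1 + P* v3^2*t2*t4*d1/t1^2,
    (dp*t4 + p*d4)/t1 - p*t4*d1/t1^2 - P*(2* v4*a4*t2*t3 + v4^2*(d2*t3+t2*d3))/t1 + P* v4^2*t2*t3*d1/t1^2,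
    2*p*dp/t1 - p^2*d1/t1^2 - P^2*(2* v3*a3* v4^2*t2^2 + 2* v3^2* v4*a4*t2^2 + 2* v3^2* v4^2*t2*d2)/t1
      + P^2* v3^2* v4^2*t2^2*d1/t1^2 - 4*(LDg P c w*t1 + Lg P c*d1)))"

lemma Zsys_deriv:
  assumes "fst x \<noteq> 0"
  shows "((\<lambda>t::real. Zsys (c + t *\<^sub>R w) (x + t *\<^sub>R d)) has_vector_derivative ZDg pic c w x d) (at 0)"
proof -
  obtain v2 v3 v4 e where c: "c = (v2,v3,v4,e)" by (cases c) auto
  obtain a2 a3 a4 ae where w: "w = (a2,a3,a4,ae)" by (cases w) auto
  obtain t1 t2 t3 t4 p where x: "x = (t1,t2,t3,t4,p)" by (cases x) auto
  obtain d1 d2 d3 d4 dp where d: "d = (d1,d2,d3,d4,dp)" by (cases d) auto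
  have t1: "t1 \<noteq> 0" using assms x by simp
  show ?thesis
    unfolding c w x d Zsys_def ZDg_def Lam0_def Lg_def LDg_def
    apply (simp add: scaleR_conv_of_real)
    apply (intro has_vector_derivative_Pair)
    by (rule has_vector_derivative_real_field; auto intro!: derivative_eq_intros simp: t1;
        simp add: field_simps t1; algebra)+
qed

definition Zg :: "complex \<Rightarrow> co \<Rightarrow> st \<Rightarrow> st" where
  "Zg P c x = (case c of (v2, v3, v4, e) \<Rightarrow> case x of (t1, t2, t3, t4, p) \<Rightarrow>
     (p,
      p / t1 * t2 - P * v2^2 * (t3 * t4) / t1,
      p / t1 * t3 - P * v3^2 * (t2 * t4) / t1,
      p / t1 * t4 - P * v4^2 * (t2 * t3) / t1,
      p^2 / t1 - P^2 * v3^2 * v4^2 * t2^2 / t1 - 4 * Lg P c * t1))"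

definition Tg :: "complex \<Rightarrow> complex \<Rightarrow> co \<Rightarrow> st \<Rightarrow> st" where
  "Tg P I c x = (case c of (v2, v3, v4, e) \<Rightarrow> case x of (t1, t2, t3, t4, p) \<Rightarrow>
     (- I / (4 * P) * p^2 / t1 + I * P / 4 * v3^2 * v4^2 * t2^2 / t1
        + I / P * Lg P c * t1,
      - I / (4 * P) * p^2 / t1^2 * t2 + I / 2 * v2^2 * p * (t3 * t4) / t1^2
        + I * P / 4 * (v3^2 * v4^2 * t2^2 - v2^2 * v4^2 * t3^2 - v2^2 * v3^2 * t4^2) * t2 / t1^2
        + I / P * Lg P c * t2,
      - I / (4 * P) * p^2 / t1^2 * t3 + I / 2 * v3^2 * p * (t2 * t4) / t1^2
        - I * P / 4 * v2^2 * v3^2 * t4^2 / t1^2 * t3 + I / P * Lg P c * t3,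
      - I / (4 * P) * p^2 / t1^2 * t4 + I / 2 * v4^2 * p * (t2 * t3) / t1^2
        - I * P / 4 * v2^2 * v4^2 * t3^2 / t1^2 * t4 + I / P * Lg P c * t4,
      - I / (4 * P) * p^3 / t1^2
        + 3 * I / P * (P^2 / 4 * v3^2 * v4^2 * t2^2 / t1^2 + Lg P c) * p
        - I / 2 * P^2 * v2^2 * v3^2 * v4^2 * (t2 * t3 * t4) / t1^2))"

definition TDg :: "complex \<Rightarrow> complex \<Rightarrow> co \<Rightarrow> st \<Rightarrow> st \<Rightarrow> st" where
  "TDg P I c x d = (case c of (v2, v3, v4, e) \<Rightarrow> 
     case x of (t1, t2, t3, t4, p) \<Rightarrow> case d of (d1, d2, d3, d4, dp) \<Rightarrow>
   (- I/(4*P)*(2*p*dp/t1 - p^2*d1/t1^2) + I*P/4 * v3^2 * v4^2 *(2*t2*d2/t1 - t2^2*d1/t1^2) + I/P * Lg P c * d1,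
    - I/(4*P)*((2*p*dp*t2 + p^2*d2)/t1^2 - 2*p^2*t2*d1/t1^3)
      + I/2 * v2^2*((dp*t3*t4 + p*d3*t4 + p*t3*d4)/t1^2 - 2*p*t3*t4*d1/t1^3)
      + I*P/4*(((2 * v3^2 * v4^2 * t2*d2 - 2 * v2^2 * v4^2 *t3*d3 - 2 * v2^2 * v3^2 * t4*d4)*t2
                + (v3^2 * v4^2 * t2^2 - v2^2 * v4^2 * t3^2 - v2^2 * v3^2 * t4^2)*d2)/t1^2
               - 2*(v3^2 * v4^2 * t2^2 - v2^2 * v4^2 * t3^2 - v2^2 * v3^2 * t4^2)*t2*d1/t1^3)
      + I/P * Lg P c * d2,
    - I/(4*P)*((2*p*dp*t3 + p^2*d3)/t1^2 - 2*p^2*t3*d1/t1^3)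
      + I/2 * v3^2*((dp*t2*t4 + p*d2*t4 + p*t2*d4)/t1^2 - 2*p*t2*t4*d1/t1^3)
      - I*P/4 * v2^2 * v3^2 *((2*t4*d4*t3 + t4^2*d3)/t1^2 - 2*t4^2*t3*d1/t1^3)
      + I/P * Lg P c * d3,
    - I/(4*P)*((2*p*dp*t4 + p^2*d4)/t1^2 - 2*p^2*t4*d1/t1^3)
      + I/2 * v4^2*((dp*t2*t3 + p*d2*t3 + p*t2*d3)/t1^2 - 2*p*t2*t3*d1/t1^3)
      - I*P/4 * v2^2 * v4^2 *((2*t3*d3*t4 + t3^2*d4)/t1^2 - 2*t3^2*t4*d1/t1^3)
      + I/P * Lg P c * d4,
    - I/(4*P)*(3*p^2*dp/t1^2 - 2*p^3*d1/t1^3)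
      + 3*I/P*(P^2/4 * v3^2 * v4^2 *(2*t2*d2/t1^2 - 2*t2^2*d1/t1^3))*p
      + 3*I/P*(P^2/4 * v3^2 * v4^2 * t2^2/t1^2 + Lg P c)*dp
      - I/2*P^2 * v2^2 * v3^2 * v4^2 *((d2*t3*t4 + t2*d3*t4 + t2*t3*d4)/t1^2 - 2*t2*t3*t4*d1/t1^3)))"

lemma Tsys_deriv:
  assumes "fst x \<noteq> 0"
  shows "((\<lambda>t::real. Tsys c (x + t *\<^sub>R d)) has_vector_derivative TDg pic \<i> c x d) (at 0)"
proof -
  obtain v2 v3 v4 e where c: "c = (v2,v3,v4,e)" by (cases c) auto
  obtain t1 t2 t3 t4 p where x: "x = (t1,t2,t3,t4,p)" by (cases x) auto
  obtain d1 d2 d3 d4 dp where d: "d = (d1,d2,d3,d4,dp)" by (cases d) auto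
  have t1: "t1 \<noteq> 0" using assms x by simp
  show ?thesis
    unfolding c x d Tsys_def TDg_def Lam0_def Lg_def
    apply (simp add: scaleR_conv_of_real)
    apply (intro has_vector_derivative_Pair)
    by (rule has_vector_derivative_real_field; auto intro!: derivative_eq_intros simp: t1;
        simp add: field_simps t1; algebra)+
qed

definition A4Dg :: "co \<Rightarrow> co \<Rightarrow> st \<Rightarrow> st \<Rightarrow> complex" where
  "A4Dg c w x d = (case c of (v2, v3, v4, e) \<Rightarrow> case w of (a2, a3, a4, ae) \<Rightarrow>
     case x of (t1, t2, t3, t4, p) \<Rightarrow> case d of (d1, d2, d3, d4, dp) \<Rightarrow>
     ((2 * v2*a2*t4^2 + 2 * v2^2*t4*d4 - 2 * v4*a4*t2^2 - 2 * v4^2*t2*d2) * (v3^2*t1^2)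
      - (v2^2*t4^2 - v4^2*t2^2) * (2 * v3*a3*t1^2 + 2 * v3^2*t1*d1)) / (v3^2*t1^2)^2)"

definition B4Dg :: "co \<Rightarrow> co \<Rightarrow> st \<Rightarrow> st \<Rightarrow> complex" where
  "B4Dg c w x d = (case c of (v2, v3, v4, e) \<Rightarrow> case w of (a2, a3, a4, ae) \<Rightarrow>
     case x of (t1, t2, t3, t4, p) \<Rightarrow> case d of (d1, d2, d3, d4, dp) \<Rightarrow>
     ((2 * v2*a2*t3^2 + 2 * v2^2*t3*d3 - 2 * v3*a3*t2^2 - 2 * v3^2*t2*d2) * (v4^2*t1^2)
      - (v2^2*t3^2 - v3^2*t2^2) * (2 * v4*a4*t1^2 + 2 * v4^2*t1*d1)) / (v4^2*t1^2)^2)"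

lemma A4_deriv:
  assumes "fst x \<noteq> 0" "fst (snd c) \<noteq> 0"
  shows "((\<lambda>t::real. A4 (c + t *\<^sub>R w) (x + t *\<^sub>R d)) has_vector_derivative A4Dg c w x d) (at 0)"
proof -
  obtain v2 v3 v4 e where c: "c = (v2,v3,v4,e)" by (cases c) auto
  obtain a2 a3 a4 ae where w: "w = (a2,a3,a4,ae)" by (cases w) auto
  obtain t1 t2 t3 t4 p where x: "x = (t1,t2,t3,t4,p)" by (cases x) auto
  obtain d1 d2 d3 d4 dp where d: "d = (d1,d2,d3,d4,dp)" by (cases d) auto
  have t1: "t1 \<noteq> 0" "v3 \<noteq> 0" using assms x c by simp_all
  show ?thesis
    unfolding c w x d A4_def A4Dg_def
    apply (simp add: scaleR_conv_of_real)
    by (rule has_vector_derivative_real_field; auto intro!: derivative_eq_intros simp: t1;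
        simp add: field_simps t1; algebra)
qed

lemma B4_deriv:
  assumes "fst x \<noteq> 0" "fst (snd (snd c)) \<noteq> 0"
  shows "((\<lambda>t::real. B4 (c + t *\<^sub>R w) (x + t *\<^sub>R d)) has_vector_derivative B4Dg c w x d) (at 0)"
proof -
  obtain v2 v3 v4 e where c: "c = (v2,v3,v4,e)" by (cases c) auto
  obtain a2 a3 a4 ae where w: "w = (a2,a3,a4,ae)" by (cases w) auto
  obtain t1 t2 t3 t4 p where x: "x = (t1,t2,t3,t4,p)" by (cases x) auto
  obtain d1 d2 d3 d4 dp where d: "d = (d1,d2,d3,d4,dp)" by (cases d) auto
  have t1: "t1 \<noteq> 0" "v4 \<noteq> 0" using assms x c by simp_all
  show ?thesis
    unfolding c w x d B4_def B4Dg_def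
    apply (simp add: scaleR_conv_of_real)
    by (rule has_vector_derivative_real_field; auto intro!: derivative_eq_intros simp: t1;
        simp add: field_simps t1; algebra)
qed

definition coefg :: "complex \<Rightarrow> complex \<Rightarrow> co \<Rightarrow> st \<Rightarrow> co" where
  "coefg P I c x = (case c of (v2, v3, v4, e) \<Rightarrow>
     (I / P * (e + P^2 / 12 * (v3^4 + v4^4)) * v2,
      I / P * (e + P^2 / 12 * (v3^4 + v4^4 - 3 * B4 c x * v4^4)) * v3,
      I / P * (e + P^2 / 12 * (v3^4 + v4^4 - 3 * A4 c x * v3^4)) * v4,
      I / P * 2 * e^2 - P^3 / 72 * I * (v3^8
         + (9 * A4 c x * B4 c x - 6 * A4 c x - 6 * B4 c x + 2) * v3^4 * v4^4 + v4^8)))"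

lemma compat_id:
  assumes nz: "P \<noteq> 0" "t1 \<noteq> 0" "v3 \<noteq> 0" "v4 \<noteq> 0"
  shows "ZDg P (v2,v3,v4,e) (coefg P I (v2,v3,v4,e) (t1,t2,t3,t4,p)) (t1,t2,t3,t4,p) (Tg P I (v2,v3,v4,e) (t1,t2,t3,t4,p))
       = TDg P I (v2,v3,v4,e) (t1,t2,t3,t4,p) (Zg P (v2,v3,v4,e) (t1,t2,t3,t4,p))"
  unfolding ZDg_def TDg_def Zg_def Tg_def coefg_def A4_def B4_def Lg_def LDg_def
  apply (simp only: prod.case prod.inject)
  apply (intro conjI)
  subgoal using nz by (simp add: field_simps) algebra
  subgoal using nz by (simp add: field_simps) algebra
  subgoal using nz by (simp add: field_simps) algebra
  subgoal using nz by (simp add: field_simps) algebra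
  subgoal using nz by (simp add: field_simps) algebra
  done

lemma A4Z: assumes nz: "t1 \<noteq> 0" "v3 \<noteq> 0"
  shows "A4Dg (v2,v3,v4,e) 0 (t1,t2,t3,t4,p) (Zg P (v2,v3,v4,e) (t1,t2,t3,t4,p)) = 0"
  unfolding A4Dg_def Zg_def zero_prod_def using nz by (simp add: field_simps) algebra

lemma B4Z: assumes nz: "t1 \<noteq> 0" "v4 \<noteq> 0"
  shows "B4Dg (v2,v3,v4,e) 0 (t1,t2,t3,t4,p) (Zg P (v2,v3,v4,e) (t1,t2,t3,t4,p)) = 0"
  unfolding B4Dg_def Zg_def zero_prod_def using nz by (simp add: field_simps) algebra

lemma A4T: assumes nz: "P \<noteq> 0" "t1 \<noteq> 0" "v3 \<noteq> 0" "v4 \<noteq> 0"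
  shows "A4Dg (v2,v3,v4,e) (coefg P I (v2,v3,v4,e) (t1,t2,t3,t4,p)) (t1,t2,t3,t4,p) (Tg P I (v2,v3,v4,e) (t1,t2,t3,t4,p)) = 0"
  unfolding A4Dg_def Tg_def coefg_def A4_def B4_def Lg_def using nz by (simp add: field_simps) algebra

lemma B4T: assumes nz: "P \<noteq> 0" "t1 \<noteq> 0" "v3 \<noteq> 0" "v4 \<noteq> 0"
  shows "B4Dg (v2,v3,v4,e) (coefg P I (v2,v3,v4,e) (t1,t2,t3,t4,p)) (t1,t2,t3,t4,p) (Tg P I (v2,v3,v4,e) (t1,t2,t3,t4,p)) = 0"
  unfolding B4Dg_def Tg_def coefg_def A4_def B4_def Lg_def using nz by (simp add: field_simps) algebra


lemma ZD_inj:
  assumes nz: "P \<noteq> 0" "t1 \<noteq> 0" "t2 \<noteq> 0" "t3 \<noteq> 0" "t4 \<noteq> 0" "v2 \<noteq> 0" "v3 \<noteq> 0" "v4 \<noteq> 0"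
    and h: "ZDg P (v2,v3,v4,e) w (t1,t2,t3,t4,p) d = ZDg P (v2,v3,v4,e) w' (t1,t2,t3,t4,p) d"
  shows "w = w'"
proof -
  obtain a2 a3 a4 ae where w: "w = (a2,a3,a4,ae)" by (cases w) auto
  obtain b2 b3 b4 be where w': "w' = (b2,b3,b4,be)" by (cases w') auto
  obtain d1 d2 d3 d4 dp where d: "d = (d1,d2,d3,d4,dp)" by (cases d) auto
  from h have h2: "(dp*t2 + p*d2)/t1 - p*t2*d1/t1^2 - P*(2* v2*a2*t3*t4 + v2^2*(d3*t4+t3*d4))/t1 + P* v2^2*t3*t4*d1/t1^2
     = (dp*t2 + p*d2)/t1 - p*t2*d1/t1^2 - P*(2* v2*b2*t3*t4 + v2^2*(d3*t4+t3*d4))/t1 + P* v2^2*t3*t4*d1/t1^2"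
    and h3: "(dp*t3 + p*d3)/t1 - p*t3*d1/t1^2 - P*(2* v3*a3*t2*t4 + v3^2*(d2*t4+t2*d4))/t1 + P* v3^2*t2*t4*d1/t1^2
     = (dp*t3 + p*d3)/t1 - p*t3*d1/t1^2 - P*(2* v3*b3*t2*t4 + v3^2*(d2*t4+t2*d4))/t1 + P* v3^2*t2*t4*d1/t1^2"
    and h4: "(dp*t4 + p*d4)/t1 - p*t4*d1/t1^2 - P*(2* v4*a4*t2*t3 + v4^2*(d2*t3+t2*d3))/t1 + P* v4^2*t2*t3*d1/t1^2
     = (dp*t4 + p*d4)/t1 - p*t4*d1/t1^2 - P*(2* v4*b4*t2*t3 + v4^2*(d2*t3+t2*d3))/t1 + P* v4^2*t2*t3*d1/t1^2"
    and h5: "2*p*dp/t1 - p^2*d1/t1^2 - P^2*(2* v3*a3* v4^2*t2^2 + 2* v3^2* v4*a4*t2^2 + 2* v3^2* v4^2*t2*d2)/t1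
      + P^2* v3^2* v4^2*t2^2*d1/t1^2 - 4*((ae + P^2/12*(4* v3^3*a3 + 4* v4^3*a4))*t1 + (e + P^2 / 12 * (v3^4 + v4^4))*d1)
     = 2*p*dp/t1 - p^2*d1/t1^2 - P^2*(2* v3*b3* v4^2*t2^2 + 2* v3^2* v4*b4*t2^2 + 2* v3^2* v4^2*t2*d2)/t1
      + P^2* v3^2* v4^2*t2^2*d1/t1^2 - 4*((be + P^2/12*(4* v3^3*b3 + 4* v4^3*b4))*t1 + (e + P^2 / 12 * (v3^4 + v4^4))*d1)"
    unfolding w w' d ZDg_def LDg_def Lg_def by (simp_all only: prod.case prod.inject)
  have e2: "a2 = b2" using h2 nz by (auto simp: field_simps)
  have e3: "a3 = b3" using h3 nz by (auto simp: field_simps)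
  have e4: "a4 = b4" using h4 nz by (auto simp: field_simps)
  have e5: "ae = be" using h5 nz unfolding e3 e4 by (auto simp: field_simps)
  show ?thesis using w w' e2 e3 e4 e5 by simp
qed

theorem theorem7p1:
  fixes v2 v3 v4 e :: complex
    and t1 t2 t3 t4 p :: complex
    and w :: co
  defines "c \<equiv> (v2, v3, v4, e)" and "x \<equiv> (t1, t2, t3, t4, p)"
  assumes "t1 \<noteq> 0" and "t2 \<noteq> 0" and "t3 \<noteq> 0" and "t4 \<noteq> 0"
    and "v2 \<noteq> 0" and "v3 \<noteq> 0" and "v4 \<noteq> 0"
  shows "(compatible c w x \<longleftrightarrow> w = coef_rhs c x)
       \<and> vector_derivative (\<lambda>t::real. A4 c (x + t *\<^sub>R Zsys c x)) (at 0) = 0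
       \<and> vector_derivative (\<lambda>t::real. B4 c (x + t *\<^sub>R Zsys c x)) (at 0) = 0
       \<and> (w = coef_rhs c x \<longrightarrow>
            vector_derivative (\<lambda>t::real. A4 (c + t *\<^sub>R w) (x + t *\<^sub>R Tsys c x)) (at 0) = 0
          \<and> vector_derivative (\<lambda>t::real. B4 (c + t *\<^sub>R w) (x + t *\<^sub>R Tsys c x)) (at 0) = 0)"
proof -
  have P: "pic \<noteq> 0" by simp
  have x1: "fst x \<noteq> 0" using assms(3) unfolding x_def by simp
  have c3: "fst (snd c) \<noteq> 0" and c4: "fst (snd (snd c)) \<noteq> 0" using assms unfolding c_def by simp_all
  have Zeq: "Zsys c x = Zg pic c x" unfolding c_def x_def Zsys_def Zg_def Lam0_def Lg_def by simp
  have Teq: "Tsys c x = Tg pic \<i> c x" unfolding c_def x_def Tsys_def Tg_def Lam0_def Lg_def by simp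
  have Ceq: "coef_rhs c x = coefg pic \<i> c x" unfolding c_def coef_rhs_def coefg_def by simp
  have comp: "compatible c w x \<longleftrightarrow> ZDg pic c w x (Tsys c x) = TDg pic \<i> c x (Zsys c x)"
    unfolding compatible_def vector_derivative_at[OF Zsys_deriv[OF x1]]
      vector_derivative_at[OF Tsys_deriv[OF x1]] ..
  have id: "ZDg pic c (coef_rhs c x) x (Tsys c x) = TDg pic \<i> c x (Zsys c x)"
    unfolding Zeq Teq Ceq unfolding c_def x_def by (rule compat_id) (use assms in auto)
  have part1: "compatible c w x \<longleftrightarrow> w = coef_rhs c x"
  proof
    assume "compatible c w x"
    then have "ZDg pic c w x (Tsys c x) = ZDg pic c (coef_rhs c x) x (Tsys c x)"
      using comp id by simp
    then show "w = coef_rhs c x" unfolding c_def x_def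
      by (rule ZD_inj[OF P assms(3-9)])
  next
    assume "w = coef_rhs c x"
    then show "compatible c w x" using comp id by simp
  qed
  have fa: "(\<lambda>t::real. A4 c (x + t *\<^sub>R Zsys c x)) = (\<lambda>t::real. A4 (c + t *\<^sub>R 0) (x + t *\<^sub>R Zsys c x))" by simp
  have fb: "(\<lambda>t::real. B4 c (x + t *\<^sub>R Zsys c x)) = (\<lambda>t::real. B4 (c + t *\<^sub>R 0) (x + t *\<^sub>R Zsys c x))" by simp
  have part2: "vector_derivative (\<lambda>t::real. A4 c (x + t *\<^sub>R Zsys c x)) (at 0) = 0"
  proof -
    have "vector_derivative (\<lambda>t::real. A4 c (x + t *\<^sub>R Zsys c x)) (at 0) = A4Dg c 0 x (Zsys c x)"
      using vector_derivative_at[OF A4_deriv[OF x1 c3, of 0 "Zsys c x"]] by simp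
    also have "\<dots> = 0" unfolding Zeq unfolding c_def x_def by (rule A4Z) (use assms in auto)
    finally show ?thesis .
  qed
  have part3: "vector_derivative (\<lambda>t::real. B4 c (x + t *\<^sub>R Zsys c x)) (at 0) = 0"
  proof -
    have "vector_derivative (\<lambda>t::real. B4 c (x + t *\<^sub>R Zsys c x)) (at 0) = B4Dg c 0 x (Zsys c x)"
      using vector_derivative_at[OF B4_deriv[OF x1 c4, of 0 "Zsys c x"]] by simp
    also have "\<dots> = 0" unfolding Zeq unfolding c_def x_def by (rule B4Z) (use assms in auto)
    finally show ?thesis .
  qed
  have part4: "w = coef_rhs c x \<longrightarrow>
            vector_derivative (\<lambda>t::real. A4 (c + t *\<^sub>R w) (x + t *\<^sub>R Tsys c x)) (at 0) = 0
          \<and> vector_derivative (\<lambda>t::real. B4 (c + t *\<^sub>R w) (x + t *\<^sub>R Tsys c x)) (at 0) = 0"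
  proof
    assume wc: "w = coef_rhs c x"
    show "vector_derivative (\<lambda>t::real. A4 (c + t *\<^sub>R w) (x + t *\<^sub>R Tsys c x)) (at 0) = 0
          \<and> vector_derivative (\<lambda>t::real. B4 (c + t *\<^sub>R w) (x + t *\<^sub>R Tsys c x)) (at 0) = 0"
      unfolding vector_derivative_at[OF A4_deriv[OF x1 c3]] vector_derivative_at[OF B4_deriv[OF x1 c4]]
        wc Ceq Teq unfolding c_def x_def
      using A4T[OF P] B4T[OF P] assms by auto
  qed
  show ?thesis using part1 part2 part3 part4 by blast
qed

end
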